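(* Let $n\ge1$ be an integer, $p\in(0,1)$, $q:=1-p$, and let $B_n$ be a binomial random variable with parameters $n$ and $p$. (i) The equation $\ln\frac{1-u}{-\ln u}-1-\frac12\,\frac{(1+u)\ln u}{1-u}=0$ has exactly one solution $u=u_*$ in $(0,1)$, and $u_*=0.00505778\ldots$. (ii) Let $u_{**}:=\frac{u_*}{1-u_*}=0.00508349\ldots$ and $j_{**}:=\Big\lfloor\frac{n-u_{**}q/p}{1+u_{**}q/p}\Big\rfloor$. Then $Q_n^{\mathrm{Lin,LC}}(x+\frac12)\le Q_n^{\mathrm{LC}}(x)$ for all real $x\le j_{**}$. (iii) If $n\le\frac pq\cdot\frac1{u_{**}}=\frac pq\cdot196.714\ldots$, then $Q_n^{\mathrm{Lin,LC}}(x+\frac12)\le Q_n^{\mathrm{LC}}(x)$ for all real $x\le n$. In particular, this holds for all $x\le n$ if $n\le196$ and $p\ge\frac12$.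
   Context: $Q_n(x):=\mathbf{P}(B_n\ge x)$ for $x\in\mathbb{R}$. $Q_n^{\mathrm{LC}}$ is the least log-concave majorant of $Q_n$ on $\mathbb{R}$; $Q_n^{\mathrm{Lin}}$ is the linear interpolation of $Q_n$ over $\mathbb{Z}$ (i.e. $Q_n^{\mathrm{Lin}}(x)=(1-(x-j))Q_n(j)+(x-j)Q_n(j+1)$ for $j\le x\le j+1$, $j\in\mathbb{Z}$); $Q_n^{\mathrm{Lin,LC}}$ is the least log-concave majorant of $Q_n^{\mathrm{Lin}}$ on $\mathbb{R}$. Here a least log-concave majorant of a function $\phi\ge0$ is the smallest function $g\ge\phi$ with $g\ge0$ and $\ln g$ concave (values $-\infty$ allowed). (In the paper's application, $p=\sigma^2/(d^2+\sigma^2)$ and $x=\frac qd y+np$, so that these quantities compare the bounds $c_2\mathbf{P}^{\mathrm{Lin,LC}}(T_n\ge y+h/2)$ and $c_2\mathbf{P}^{\mathrm{LC}}(T_n\ge y)$.) *)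

theory Defs
  imports "HOL-Probability.Probability"
begin

definition binom_tail :: "nat \<Rightarrow> real \<Rightarrow> real \<Rightarrow> real" where
  "binom_tail n p x = measure_pmf.prob (binomial_pmf n p) {k. x \<le> real k}"

text \<open>Log-concavity on the real line: g \<ge> 0 and ln g concave, with value -\<infinity>
  allowed (i.e. g may vanish). Written multiplicatively; powr gives 0 at base 0.\<close>
definition log_concave :: "(real \<Rightarrow> real) \<Rightarrow> bool" where
  "log_concave g \<longleftrightarrow> (\<forall>x. 0 \<le> g x) \<and>
     (\<forall>x y t. 0 < t \<and> t < 1 \<longrightarrow>
        g x powr (1 - t) * g y powr t \<le> g ((1 - t) * x + t * y))"

definition LC_majorant :: "(real \<Rightarrow> real) \<Rightarrow> real \<Rightarrow> real" where
  "LC_majorant \<phi> x = (INF g \<in> {g. log_concave g \<and> (\<forall>y. \<phi> y \<le> g y)}. g x)"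

definition lin_interp :: "(real \<Rightarrow> real) \<Rightarrow> real \<Rightarrow> real" where
  "lin_interp \<phi> x = (let j = real_of_int \<lfloor>x\<rfloor> in
      (1 - (x - j)) * \<phi> j + (x - j) * \<phi> (j + 1))"

definition Q_LC :: "nat \<Rightarrow> real \<Rightarrow> real \<Rightarrow> real" where
  "Q_LC n p = LC_majorant (binom_tail n p)"

definition Q_Lin_LC :: "nat \<Rightarrow> real \<Rightarrow> real \<Rightarrow> real" where
  "Q_Lin_LC n p = LC_majorant (lin_interp (binom_tail n p))"

definition ustar_eq :: "real \<Rightarrow> real" where
  "ustar_eq u = ln ((1 - u) / (- ln u)) - 1 - (1/2) * ((1 + u) * ln u / (1 - u))"

definition u_star :: real where
  "u_star = (THE u. 0 < u \<and> u < 1 \<and> ustar_eq u = 0)"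

definition u_sstar :: real where
  "u_sstar = u_star / (1 - u_star)"

definition j_sstar :: "nat \<Rightarrow> real \<Rightarrow> int" where
  "j_sstar n p = (let q = 1 - p in
     \<lfloor>(real n - u_sstar * q / p) / (1 + u_sstar * q / p)\<rfloor>)"

end

theory Submission
  imports Defs
begin

definition Pb :: "nat \<Rightarrow> real \<Rightarrow> nat \<Rightarrow> real" where
  "Pb n p i = real (n choose i) * p ^ i * (1 - p) ^ (n - i)"

definition Tb :: "nat \<Rightarrow> real \<Rightarrow> nat \<Rightarrow> real" where
  "Tb n p k = (\<Sum>i\<in>{k..n}. Pb n p i)"

lemma Pb_nonneg: "0 \<le> p \<Longrightarrow> p \<le> 1 \<Longrightarrow> 0 \<le> Pb n p i"
  by (simp add: Pb_def)

lemma Pb_pos: "0 < p \<Longrightarrow> p < 1 \<Longrightarrow> i \<le> n \<Longrightarrow> 0 < Pb n p i"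
  by (simp add: Pb_def)

lemma Pb_zero: "n < i \<Longrightarrow> Pb n p i = 0"
  by (simp add: Pb_def)

lemma binom_tail_int:
  assumes "0 < p" "p < 1"
  shows "binom_tail n p (real_of_int k) = Tb n p (nat k)"
proof -
  have "binom_tail n p (real_of_int k) =
        measure (measure_pmf (binomial_pmf n p)) ({m. real_of_int k \<le> real m} \<inter> set_pmf (binomial_pmf n p))"
    unfolding binom_tail_def by (simp add: measure_Int_set_pmf)
  also have "{m. real_of_int k \<le> real m} \<inter> set_pmf (binomial_pmf n p) = {nat k..n}"
    using assms by (auto simp: le_nat_iff)
  also have "measure (measure_pmf (binomial_pmf n p)) {nat k..n} = Tb n p (nat k)"
    using assms by (simp add: measure_measure_pmf_finite Tb_def Pb_def)
  finally show ?thesis .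
qed

lemma Tb_nonneg: "0 \<le> p \<Longrightarrow> p \<le> 1 \<Longrightarrow> 0 \<le> Tb n p k"
  unfolding Tb_def by (intro sum_nonneg) (simp add: Pb_nonneg)

lemma Tb_pos: "0 < p \<Longrightarrow> p < 1 \<Longrightarrow> k \<le> n \<Longrightarrow> 0 < Tb n p k"
  unfolding Tb_def
  by (rule sum_pos2[where i=k]) (auto simp: Pb_nonneg Pb_pos)

lemma Tb_zero: "n < k \<Longrightarrow> Tb n p k = 0"
  unfolding Tb_def by simp

lemma Tb_0: "Tb n p 0 = 1"
proof -
  have "Tb n p 0 = (\<Sum>i\<le>n. real (n choose i) * p ^ i * (1 - p) ^ (n - i))"
    unfolding Tb_def Pb_def by (simp add: atLeast0AtMost)
  also have "\<dots> = (p + (1 - p)) ^ n"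
    by (subst binomial_ring) (simp add: mult_ac)
  finally show ?thesis by simp
qed

lemma Tb_Suc: "k \<le> n \<Longrightarrow> Tb n p k = Pb n p k + Tb n p (Suc k)"
  unfolding Tb_def by (simp add: sum.atLeast_Suc_atMost)

lemma Tb_Suc_all: "Tb n p k = Pb n p k + Tb n p (Suc k)"
  by (cases "k \<le> n") (auto simp: Tb_Suc Tb_zero Pb_zero)

lemma Tb_mono: "0 \<le> p \<Longrightarrow> p \<le> 1 \<Longrightarrow> Tb n p (Suc k) \<le> Tb n p k"
  using Tb_Suc_all[of n p k] Pb_nonneg[of p n k] by simp

lemma Tb_antimono:
  assumes "0 \<le> p" "p \<le> 1" "k \<le> l" shows "Tb n p l \<le> Tb n p k"
  using assms(3)
proof (induction rule: dec_induct)
  case (step m)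
  then show ?case using Tb_mono[OF assms(1,2), of n m] by linarith
qed simp

lemma Tb_le1: "0 \<le> p \<Longrightarrow> p \<le> 1 \<Longrightarrow> Tb n p k \<le> 1"
  using Tb_antimono[of p 0 k n] Tb_0 by simp

lemma Pb_ratio:
  assumes "i < n"
  shows "Pb n p (Suc i) * (real (Suc i) * (1 - p)) = Pb n p i * (real (n - i) * p)"
proof -
  have c: "real (n choose Suc i) * real (Suc i) = real (n choose i) * real (n - i)"
  proof -
    have "(n - i) * (n choose i) = n * ((n - 1) choose i)" by (rule binomial_absorb_comp)
    moreover have "Suc i * (n choose Suc i) = n * ((n - 1) choose i)"
      using times_binomial_minus1_eq[of "Suc i" n] by simp
    ultimately have "(n choose Suc i) * Suc i = (n choose i) * (n - i)" by (simp add: mult.commute)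
    then show ?thesis by (metis of_nat_mult)
  qed
  have e: "n - i = Suc (n - Suc i)" using assms by simp
  have "Pb n p (Suc i) * (real (Suc i) * (1 - p)) =
        (real (n choose Suc i) * real (Suc i)) * (p * p^i * ((1-p)^(n - Suc i) * (1-p)))"
    by (simp add: Pb_def algebra_simps)
  also have "\<dots> = (real (n choose i) * real (n-i)) * (p * p^i * (1-p)^(n-i))"
    using c by (simp add: e mult.commute)
  also have "\<dots> = Pb n p i * (real (n - i) * p)"
    by (simp add: Pb_def algebra_simps)
  finally show ?thesis .
qed


lemma Pb_cross:
  assumes p: "0 < p" "p < 1" and mi: "m \<le> i"
  shows "Pb n p (Suc i) * Pb n p m \<le> Pb n p i * Pb n p (Suc m)"
proof (cases "i < n")
  case False
  then show ?thesis using p by (simp add: Pb_zero Pb_nonneg)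
next
  case True
  have mn: "m < n" using True mi by simp
  define q where "q = 1 - p"
  have q: "0 < q" using p by (simp add: q_def)
  have e1: "Pb n p (Suc i) * (real (Suc i) * q) = Pb n p i * (real (n - i) * p)"
    using Pb_ratio[OF True] by (simp add: q_def)
  have e2: "Pb n p (Suc m) * (real (Suc m) * q) = Pb n p m * (real (n - m) * p)"
    using Pb_ratio[OF mn] by (simp add: q_def)
  have key: "real (n - i) * real (Suc m) \<le> real (n - m) * real (Suc i)"
  proof -
    have a1: "real (n - i) = real n - real i" using True by (simp add: of_nat_diff)
    have a2: "real (n - m) = real n - real m" using mn by (simp add: of_nat_diff)
    have "(real n - real m) * (real i + 1) - (real n - real i) * (real m + 1) = (real n + 1) * (real i - real m)"
      by (simp add: algebra_simps)
    moreover have "0 \<le> (real n + 1) * (real i - real m)" using mi by simp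
    ultimately have h: "(real n - real i) * (real m + 1) \<le> (real n - real m) * (real i + 1)" by linarith
    have "real (Suc m) = real m + 1" "real (Suc i) = real i + 1" by simp_all
    then show ?thesis unfolding a1 a2 using h by presburger
  qed
  define A B C D where "A = Pb n p (Suc i)" and "B = Pb n p m" and "C = Pb n p i" and "D = Pb n p (Suc m)"
  define \<alpha> \<beta> where "\<alpha> = real (Suc i) * q" and "\<beta> = real (Suc m) * q"
  have E1: "A * \<alpha> = C * (real (n - i) * p)" using e1 by (simp add: A_def C_def \<alpha>_def)
  have E2: "D * \<beta> = B * (real (n - m) * p)" using e2 by (simp add: B_def D_def \<beta>_def)
  have pos: "0 < \<alpha> * \<beta>" using q by (simp add: \<alpha>_def \<beta>_def)
  have nnCB: "0 \<le> C * B * p * q" using p q by (simp add: C_def B_def Pb_nonneg)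
  have "(A * B) * (\<alpha> * \<beta>) = (A * \<alpha>) * (B * \<beta>)" by (simp only: mult_ac)
  also have "\<dots> = (C * (real (n - i) * p)) * (B * \<beta>)" by (simp only: E1)
  also have "\<dots> = (C * B * p * q) * (real (n - i) * real (Suc m))" by (simp only: \<beta>_def mult_ac)
  also have "\<dots> \<le> (C * B * p * q) * (real (n - m) * real (Suc i))"
    using key nnCB by (rule mult_left_mono)
  also have "\<dots> = (C * \<alpha>) * (D * \<beta>)" by (simp only: E2 \<alpha>_def mult_ac)
  also have "\<dots> = (C * D) * (\<alpha> * \<beta>)" by (simp only: mult_ac)
  finally have "A * B \<le> C * D" using pos by (simp add: mult_le_cancel_right)
  then show ?thesis by (simp add: A_def B_def C_def D_def)
qed

lemma Tb_shift: "Tb n p (Suc m) = (\<Sum>i\<in>{m..n}. Pb n p (Suc i))"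
proof (cases "m \<le> n")
  case True
  have "(\<Sum>i\<in>{m..n}. Pb n p (Suc i)) = (\<Sum>i\<in>{Suc m..Suc n}. Pb n p i)"
    by (rule sum.shift_bounds_cl_Suc_ivl[symmetric])
  also have "\<dots> = Tb n p (Suc m) + Pb n p (Suc n)"
    unfolding Tb_def using True by (simp add: sum.cl_ivl_Suc)
  finally show ?thesis by (simp add: Pb_zero)
next
  case False
  then show ?thesis by (simp add: Tb_zero)
qed

lemma Tb_hazard:
  assumes p: "0 < p" "p < 1"
  shows "Tb n p (Suc m) * Pb n p m \<le> Tb n p m * Pb n p (Suc m)"
proof -
  have "Tb n p (Suc m) * Pb n p m = (\<Sum>i\<in>{m..n}. Pb n p (Suc i) * Pb n p m)"
    by (simp add: Tb_shift sum_distrib_right)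
  also have "\<dots> \<le> (\<Sum>i\<in>{m..n}. Pb n p i * Pb n p (Suc m))"
    by (intro sum_mono Pb_cross[OF p]) simp
  also have "\<dots> = Tb n p m * Pb n p (Suc m)"
    by (simp add: Tb_def sum_distrib_right)
  finally show ?thesis .
qed

lemma Tb_logconc:
  assumes p: "0 < p" "p < 1"
  shows "Tb n p (Suc (Suc m)) * Tb n p m \<le> Tb n p (Suc m) ^ 2"
proof -
  define X a b where "X = Tb n p (Suc m)" and "a = Pb n p m" and "b = Pb n p (Suc m)"
  have t0: "Tb n p m = a + X" using Tb_Suc_all[of n p m] by (simp add: X_def a_def)
  have t2: "Tb n p (Suc (Suc m)) = X - b" using Tb_Suc_all[of n p "Suc m"] by (simp add: X_def b_def)
  have h: "X * a \<le> (a + X) * b" using Tb_hazard[OF p, of n m] t0 by (simp add: X_def a_def b_def)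
  have "Tb n p (Suc (Suc m)) * Tb n p m = X^2 + (X * a - (a + X) * b)"
    by (simp only: t0 t2) (simp add: algebra_simps power2_eq_square)
  then have "Tb n p (Suc (Suc m)) * Tb n p m \<le> X^2" using h by linarith
  then show ?thesis by (simp add: X_def)
qed

lemma Tb_ratio_mono:
  assumes p: "0 < p" "p < 1"
  shows "Tb n p (Suc (k + d)) * Tb n p k \<le> Tb n p (k + d) * Tb n p (Suc k)"
proof (induction d)
  case 0
  then show ?case by (simp add: mult.commute)
next
  case (Suc d)
  have nn: "\<And>k. 0 \<le> Tb n p k" using p by (simp add: Tb_nonneg)
  show ?case
  proof (cases "Tb n p (k + d) = 0")
    case True
    have "Tb n p (Suc (k + Suc d)) \<le> Tb n p (k + d)"
      using p by (intro Tb_antimono) auto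
    then have "Tb n p (Suc (k + Suc d)) = 0" using True nn[of "Suc (k + Suc d)"] by simp
    then show ?thesis using nn by simp
  next
    case False
    then have pos: "0 < Tb n p (k + d)" using nn[of "k+d"] by simp
    have lc: "Tb n p (Suc (Suc (k + d))) * Tb n p (k + d) \<le> Tb n p (Suc (k + d)) ^ 2"
      by (rule Tb_logconc[OF p])
    have "Tb n p (Suc (k + Suc d)) * Tb n p k * Tb n p (k + d)
          = (Tb n p (Suc (Suc (k + d))) * Tb n p (k + d)) * Tb n p k" by (simp add: mult_ac)
    also have "\<dots> \<le> Tb n p (Suc (k + d)) ^ 2 * Tb n p k"
      using lc nn by (intro mult_right_mono) auto
    also have "\<dots> = Tb n p (Suc (k + d)) * (Tb n p (Suc (k + d)) * Tb n p k)"
      by (simp add: power2_eq_square mult_ac)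
    also have "\<dots> \<le> Tb n p (Suc (k + d)) * (Tb n p (k + d) * Tb n p (Suc k))"
      using Suc.IH nn by (intro mult_left_mono) auto
    also have "\<dots> = Tb n p (k + Suc d) * Tb n p (Suc k) * Tb n p (k + d)"
      by (simp add: mult_ac)
    finally show ?thesis using pos by (simp add: mult_le_cancel_right)
  qed
qed

lemma Tb_up:
  assumes p: "0 < p" "p < 1" and j: "j < n"
  shows "Tb n p (j + d) \<le> Tb n p j * (Tb n p (Suc j) / Tb n p j) ^ d"
proof (induction d)
  case 0
  then show ?case by simp
next
  case (Suc d)
  have pos: "0 < Tb n p j" using p j by (intro Tb_pos) auto
  have nn: "\<And>k. 0 \<le> Tb n p k" using p by (simp add: Tb_nonneg)
  have r: "Tb n p (Suc (j + d)) * Tb n p j \<le> Tb n p (j + d) * Tb n p (Suc j)"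
    by (rule Tb_ratio_mono[OF p])
  have "Tb n p (j + Suc d) \<le> Tb n p (j + d) * (Tb n p (Suc j) / Tb n p j)"
    using r pos by (simp add: field_simps)
  also have "\<dots> \<le> Tb n p j * (Tb n p (Suc j) / Tb n p j) ^ d * (Tb n p (Suc j) / Tb n p j)"
    using Suc.IH nn pos by (intro mult_right_mono) auto
  finally show ?case by (simp add: mult_ac)
qed

lemma Tb_down:
  assumes p: "0 < p" "p < 1" and j: "j < n" and e: "e \<le> j"
  shows "Tb n p (j - e) * (Tb n p (Suc j) / Tb n p j) ^ e \<le> Tb n p j"
  using e
proof (induction e)
  case 0
  then show ?case by simp
next
  case (Suc e)
  define k where "k = j - Suc e"
  have kj: "k < j" and ke: "Suc k = j - e" using Suc.prems by (auto simp: k_def)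
  have pos: "0 < Tb n p j" using p j by (intro Tb_pos) auto
  have nn: "\<And>k. 0 \<le> Tb n p k" using p by (simp add: Tb_nonneg)
  obtain d where d: "j = k + d" using kj by (metis less_imp_add_positive)
  have r: "Tb n p (Suc j) * Tb n p k \<le> Tb n p j * Tb n p (Suc k)"
    using Tb_ratio_mono[OF p, of n k d] d by simp
  have s: "Tb n p k * (Tb n p (Suc j) / Tb n p j) \<le> Tb n p (Suc k)"
    using r pos by (simp add: field_simps mult.commute)
  have "Tb n p (j - Suc e) * (Tb n p (Suc j) / Tb n p j) ^ Suc e
        = (Tb n p k * (Tb n p (Suc j) / Tb n p j)) * (Tb n p (Suc j) / Tb n p j) ^ e"
    by (simp add: k_def mult_ac)
  also have "\<dots> \<le> Tb n p (Suc k) * (Tb n p (Suc j) / Tb n p j) ^ e"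
    using s nn pos by (intro mult_right_mono) auto
  also have "\<dots> \<le> Tb n p j" using Suc ke by simp
  finally show ?case .
qed

lemma Tb_logconc_int:
  assumes p: "0 < p" "p < 1" and j: "j < n"
  shows "Tb n p (nat k) \<le> Tb n p j * (Tb n p (Suc j) / Tb n p j) powr (real_of_int k - real j)"
proof -
  define \<rho> where "\<rho> = Tb n p (Suc j) / Tb n p j"
  have pos: "0 < Tb n p j" using p j by (intro Tb_pos) auto
  have pos1: "0 < Tb n p (Suc j)" using p j by (intro Tb_pos) auto
  have rpos: "0 < \<rho>" using pos pos1 by (simp add: \<rho>_def)
  have rle: "\<rho> \<le> 1" using Tb_mono[of p n j] p pos by (simp add: \<rho>_def)
  have down: "Tb n p k' \<le> Tb n p j * \<rho> powr (real k' - real j)" if "k' \<le> j" for k'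
  proof -
    have "Tb n p (j - (j - k')) * \<rho> ^ (j - k') \<le> Tb n p j"
      using Tb_down[OF p j, of "j - k'"] by (simp add: \<rho>_def)
    then have "Tb n p k' * \<rho> ^ (j - k') \<le> Tb n p j" using that by simp
    moreover have "\<rho> powr (real k' - real j) = inverse (\<rho> ^ (j - k'))"
      using that rpos by (simp add: powr_minus[symmetric] of_nat_diff powr_realpow[symmetric])
    ultimately have eq: "\<rho> ^ (j - k') * \<rho> powr (real k' - real j) = 1" using rpos by simp
    have "Tb n p k' = Tb n p k' * \<rho> ^ (j - k') * \<rho> powr (real k' - real j)"
      using eq by (simp add: mult.assoc)
    also have "\<dots> \<le> Tb n p j * \<rho> powr (real k' - real j)"
      using \<open>Tb n p k' * \<rho> ^ (j - k') \<le> Tb n p j\<close> by (intro mult_right_mono) auto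
    finally show ?thesis .
  qed
  show ?thesis
  proof (cases "k < 0")
    case True
    have "Tb n p (nat k) = Tb n p 0" using True by simp
    also have "\<dots> \<le> Tb n p j * \<rho> powr (real 0 - real j)" by (rule down) simp
    also have "\<dots> \<le> Tb n p j * \<rho> powr (real_of_int k - real j)"
      using True rpos rle pos by (intro mult_left_mono powr_mono') auto
    finally show ?thesis by (simp add: \<rho>_def)
  next
    case False
    then obtain k' where k': "k = int k'" by (metis nonneg_int_cases not_less)
    show ?thesis
    proof (cases "k' \<le> j")
      case True
      then show ?thesis using down[OF True] k' by (simp add: \<rho>_def)
    next
      case False
      then obtain d where d: "k' = j + d" by (metis le_add_diff_inverse nat_le_linear)
      have nk: "nat k = j + d" using k' d by (metis nat_int)
      have "Tb n p (nat k) \<le> Tb n p j * \<rho> ^ d" using Tb_up[OF p j, of d] nk by (simp add: \<rho>_def)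
      also have "\<rho> ^ d = \<rho> powr (real_of_int k - real j)"
        using rpos k' d by (simp add: powr_realpow)
      finally show ?thesis by (simp add: \<rho>_def)
    qed
  qed
qed


definition Gs :: "real \<Rightarrow> real" where
  "Gs a = ln (sinh a / a) + a * cosh a / sinh a - a - 1"

definition Gd :: "real \<Rightarrow> real" where
  "Gd a = 2 * cosh a / sinh a - 1 / a - a / (sinh a)^2 - 1"

lemma cc: "cosh (a::real) * cosh a = sinh a * sinh a + 1"
  using cosh_square_eq[of a] by (simp add: power2_eq_square)

lemma Gs_deriv: "0 < a \<Longrightarrow> (Gs has_real_derivative Gd a) (at a)"
  unfolding Gs_def[abs_def]
  apply (rule derivative_eq_intros refl | simp)+
  apply (simp add: Gd_def field_simps power2_eq_square)
  using cc[of a] by algebra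

lemma sinh_gt_self: assumes "0 < a" shows "a < sinh (a::real)"
proof -
  have "(\<lambda>x. sinh x - x) 0 < (\<lambda>x. sinh x - x) a"
  proof (rule DERIV_pos_imp_increasing_open[OF assms])
    fix x :: real assume x: "0 < x" "x < a"
    have "1 < cosh x" using cosh_real_ge_1[of x] cosh_real_one_iff[of x] x by linarith
    then show "\<exists>y. ((\<lambda>x. sinh x - x) has_real_derivative y) (at x) \<and> 0 < y"
      by (intro exI[of _ "cosh x - 1"]) (auto intro!: derivative_eq_intros)
  next
    show "continuous_on {0..a} (\<lambda>x. sinh x - x)"
      by (intro continuous_intros)
  qed
  then show ?thesis by simp
qed

lemma sinh_lt_acosh: assumes "0 < a" shows "sinh a < a * cosh (a::real)"
proof -
  have "(\<lambda>x. x * cosh x - sinh x) 0 < (\<lambda>x. x * cosh x - sinh x) a"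
  proof (rule DERIV_pos_imp_increasing_open[OF assms])
    fix x :: real assume x: "0 < x" "x < a"
    have "0 < x * sinh x" using x by simp
    then show "\<exists>y. ((\<lambda>x. x * cosh x - sinh x) has_real_derivative y) (at x) \<and> 0 < y"
      by (intro exI[of _ "x * sinh x"]) (auto intro!: derivative_eq_intros)
  next
    show "continuous_on {0..a} (\<lambda>x. x * cosh x - sinh x)"
      by (intro continuous_intros)
  qed
  then show ?thesis by simp
qed

definition Gdd :: "real \<Rightarrow> real" where
  "Gdd a = (1 / a^2 - 1 / (sinh a)^2) + 2 * (a * cosh a - sinh a) / (sinh a)^3"

lemma Gd_deriv: "0 < a \<Longrightarrow> (Gd has_real_derivative Gdd a) (at a)"
  unfolding Gd_def[abs_def]
  apply (rule derivative_eq_intros refl | simp)+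
  apply (simp add: Gdd_def field_simps power2_eq_square power3_eq_cube)
  using cc[of a] by algebra

lemma Gdd_pos: assumes "0 < a" shows "0 < Gdd a"
proof -
  have s: "a < sinh a" by (rule sinh_gt_self[OF assms])
  have "1 / (sinh a)^2 < 1 / a^2" using s assms
    by (intro divide_strict_left_mono power_strict_mono) auto
  moreover have "0 < 2 * (a * cosh a - sinh a) / (sinh a)^3"
    using sinh_lt_acosh[OF assms] assms by simp
  ultimately show ?thesis unfolding Gdd_def by linarith
qed

lemma Gd_strict_mono: assumes "0 < x" "x < y" shows "Gd x < Gd y"
proof (rule DERIV_pos_imp_increasing[of x y Gd])
  fix t assume "x \<le> t" "t \<le> y"
  then have t: "0 < t" using assms by simp
  show "\<exists>d. DERIV Gd t :> d \<and> 0 < d"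
    by (intro exI[of _ "Gdd t"] conjI Gd_deriv Gdd_pos t)
qed (use assms in simp)

lemma Gs_convex:
  assumes "0 < x" "x < y" "y < z"
  shows "(Gs y - Gs x) * (z - y) < (Gs z - Gs y) * (y - x)"
proof -
  obtain \<xi>1 where x1: "x < \<xi>1" "\<xi>1 < y" "Gs y - Gs x = (y - x) * Gd \<xi>1"
    using MVT2[of x y Gs Gd] assms Gs_deriv by force
  obtain \<xi>2 where x2: "y < \<xi>2" "\<xi>2 < z" "Gs z - Gs y = (z - y) * Gd \<xi>2"
    using MVT2[of y z Gs Gd] assms Gs_deriv by force
  have "Gd \<xi>1 < Gd \<xi>2" using x1 x2 assms by (intro Gd_strict_mono) auto
  then have "(y - x) * (z - y) * Gd \<xi>1 < (y - x) * (z - y) * Gd \<xi>2"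
    using assms by (intro mult_strict_left_mono) auto
  moreover have "(Gs y - Gs x) * (z - y) = (y - x) * (z - y) * Gd \<xi>1"
    unfolding x1(3) by (simp only: mult_ac)
  moreover have "(Gs z - Gs y) * (y - x) = (y - x) * (z - y) * Gd \<xi>2"
    unfolding x2(3) by (simp only: mult_ac)
  ultimately show ?thesis by linarith
qed

lemma Gs_lim: "(Gs \<longlongrightarrow> (0::real)) (at_right (0::real))"
proof -
  have dd: "((\<lambda>x. sinh x) has_real_derivative 1) (at (0::real))"
    using has_field_derivative_sinh[OF DERIV_ident, of "0::real"] by simp
  have d: "((\<lambda>y. (sinh y - sinh 0) / (y - 0)) \<longlongrightarrow> 1) (at (0::real))"
    using has_field_derivative_iff[THEN iffD1, OF dd] by simp
  have le: "at_right (0::real) \<le> at 0" by (rule at_le) simp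
  have s: "((\<lambda>y. sinh y / y) \<longlongrightarrow> 1) (at_right (0::real))"
    using tendsto_mono[OF le d] by simp
  have c: "(cosh \<longlongrightarrow> cosh 0) (at_right (0::real))"
    by (intro tendsto_intros)
  have l1: "((\<lambda>y. ln (sinh y / y)) \<longlongrightarrow> ln 1) (at_right (0::real))"
    by (rule tendsto_ln[OF s]) simp
  have l2: "((\<lambda>y. cosh y / (sinh y / y)) \<longlongrightarrow> cosh 0 / 1) (at_right (0::real))"
    by (rule tendsto_divide[OF c s]) simp
  have l3: "((\<lambda>y. y) \<longlongrightarrow> 0) (at_right (0::real))"
    by (rule tendsto_ident_at)
  have l: "((\<lambda>y. ln (sinh y / y) + cosh y / (sinh y / y) - y - 1) \<longlongrightarrow> ln 1 + cosh 0 / 1 - 0 - 1) (at_right (0::real))"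
    by (intro tendsto_diff tendsto_add l1 l2 l3 tendsto_const)
  have eq: "ln (sinh y / y) + cosh y / (sinh y / y) - y - 1 = Gs y" if "0 < y" for y
    unfolding Gs_def by (simp add: mult.commute)
  show ?thesis
  proof (rule Lim_transform_eventually)
    show "((\<lambda>y. ln (sinh y / y) + cosh y / (sinh y / y) - y - 1) \<longlongrightarrow> 0) (at_right (0::real))"
      using l by simp
    show "\<forall>\<^sub>F y in at_right 0. ln (sinh y / y) + cosh y / (sinh y / y) - y - 1 = Gs y"
      unfolding eventually_at_right_field by (intro exI[of _ 1]) (auto simp: Gs_def algebra_simps)
  qed
qed

lemma Gs_neg_before_root:
  assumes b: "Gs b = 0" and a: "0 < a" "a < b"
  shows "Gs a < 0"
proof -
  have le: "Gs y \<le> 0" if y: "0 < y" "y < b" for y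
  proof (rule ccontr)
    assume "\<not> Gs y \<le> 0"
    then have gy: "0 < Gs y" by simp
    have "\<forall>\<^sub>F e in at_right 0. Gs e < Gs y"
      using Gs_lim gy by (rule order_tendstoD)
    then obtain c where c: "0 < c" "\<And>e. 0 < e \<Longrightarrow> e < c \<Longrightarrow> Gs e < Gs y"
      by (auto simp: eventually_at_right_field)
    define e where "e = min c y / 2"
    have e: "0 < e" "e < c" "e < y" using c y by (auto simp: e_def)
    have ge: "Gs e < Gs y" using c e by auto
    have cv: "(Gs y - Gs e) * (b - y) < (Gs b - Gs y) * (y - e)"
      using Gs_convex[of e y b] e y by auto
    then have "Gs y * (b - e) < Gs e * (b - y)" using b by (simp add: algebra_simps)
    moreover have "Gs e * (b - y) \<le> Gs y * (b - y)"
      using ge y by (intro mult_right_mono) auto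
    moreover have "Gs y * (b - y) \<le> Gs y * (b - e)"
      using gy e by (intro mult_left_mono) auto
    ultimately show False by linarith
  qed
  have a2: "Gs (a/2) \<le> 0" using le[of "a/2"] a by auto
  have cv: "(Gs a - Gs (a/2)) * (b - a) < (Gs b - Gs a) * (a - a/2)"
    using Gs_convex[of "a/2" a b] a by auto
  have "Gs a \<le> 0" using le a by auto
  moreover have "Gs a \<noteq> 0"
  proof
    assume "Gs a = 0"
    then have "- Gs (a/2) * (b - a) < 0" using cv b by simp
    then show False using a2 a mult_nonpos_nonneg[of "Gs (a/2)" "b - a"] by linarith
  qed
  ultimately show ?thesis by linarith
qed

lemma scalar_ineq:
  fixes \<rho> t :: real
  assumes r: "0 < \<rho>" "\<rho> < 1" and ue: "ustar_eq \<rho> \<le> 0"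
  shows "1 - (1 - \<rho>) * t \<le> \<rho> powr (t - 1/2)"
proof -
  define L where "L = - ln \<rho>"
  have L: "0 < L" using r by (simp add: L_def)
  define m where "m = (1 - \<rho>) / L"
  have m: "0 < m" using r L by (simp add: m_def)
  define w where "w = \<rho> powr (t - 1/2)"
  have w: "0 < w" using r by (simp add: w_def)
  have lnw: "ln w = - (t - 1/2) * L" using r by (simp add: w_def L_def ln_powr algebra_simps)
  have ue2: "ln m - 1 + (1 + \<rho>) / (2 * m) \<le> 0"
  proof -
    have "ustar_eq \<rho> = ln m - 1 + (1 + \<rho>) / (2 * m)"
      unfolding ustar_eq_def m_def using r L by (simp add: L_def field_simps)
    then show ?thesis using ue by simp
  qed
  have key: "m * ln m - m + (1 + \<rho>) / 2 \<le> 0"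
  proof -
    have "m * (ln m - 1 + (1 + \<rho>) / (2 * m)) \<le> 0"
      using ue2 m by (simp add: mult_nonneg_nonpos)
    moreover have "m * (ln m - 1 + (1 + \<rho>) / (2 * m)) = m * ln m - m + (1 + \<rho>) / 2"
      using m by (simp add: field_simps)
    ultimately show ?thesis by simp
  qed
  have lnle: "ln (w / m) \<le> w / m - 1" using w m by (intro ln_le_minus_one) simp
  then have "ln w - ln m \<le> w / m - 1" using w m by (simp add: ln_div)
  then have "m * (ln w - ln m) \<le> m * (w / m - 1)" using m by (intro mult_left_mono) auto
  then have a: "m * ln w \<le> m * ln m + w - m" using m by (simp add: algebra_simps)
  have "1 - (1 - \<rho>) * t = (1 + \<rho>) / 2 + m * ln w"
    using L by (simp add: lnw m_def field_simps)
  also have "\<dots> \<le> w" using a key by linarith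
  finally show ?thesis by (simp add: w_def)
qed


lemma exp_lb0:
  fixes z L :: real
  assumes "0 \<le> z" "L \<le> (\<Sum>m<N. z^m / fact m)"
  shows "L \<le> exp z"
proof -
  obtain t where t: "\<bar>t\<bar> \<le> \<bar>z\<bar>" "exp z = (\<Sum>m<N. z^m / fact m) + exp t / fact N * z ^ N"
    using Maclaurin_exp_le[of z N] by blast
  have "0 \<le> exp t / fact N * z ^ N" using assms by simp
  then show ?thesis using t assms by linarith
qed

lemma exp_ub0:
  fixes z U :: real
  assumes "0 \<le> z" "z^N < fact N" "(\<Sum>m<N. z^m / fact m) / (1 - z^N / fact N) \<le> U"
  shows "exp z \<le> U"
proof -
  obtain t where t: "\<bar>t\<bar> \<le> \<bar>z\<bar>" "exp z = (\<Sum>m<N. z^m / fact m) + exp t / fact N * z ^ N"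
    using Maclaurin_exp_le[of z N] by blast
  define S r where "S = (\<Sum>m<N. z^m / fact m)" and "r = z^N / fact N"
  have r0: "0 \<le> r" using assms by (simp add: r_def)
  have r1: "r < 1" using assms by (simp add: r_def)
  have E: "exp z = S + exp t * r" using t(2) by (simp add: S_def r_def)
  have "t \<le> z" using abs_le_D1[OF t(1)] assms by simp
  then have "exp t \<le> exp z" by simp
  then have "exp t * r \<le> exp z * r" using r0 by (rule mult_right_mono)
  moreover have "exp z * (1 - r) = exp z - exp z * r" by (simp add: algebra_simps)
  ultimately have "exp z * (1 - r) \<le> S" using E by linarith
  then have "exp z \<le> S / (1 - r)" using r1 by (simp add: le_divide_eq)
  then show ?thesis using assms by (simp add: S_def r_def)
qed

lemma exp_lb_sq:
  fixes z L L' z' :: real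
  assumes "L \<le> exp z" "0 \<le> L" "L' \<le> L * L" "z' = 2 * z"
  shows "L' \<le> exp z'"
proof -
  have "L * L \<le> exp z * exp z" using assms by (intro mult_mono) auto
  also have "\<dots> = exp z'" using assms by (simp add: exp_add[symmetric])
  finally show ?thesis using assms by linarith
qed

lemma exp_ub_sq:
  fixes z U U' z' :: real
  assumes "exp z \<le> U" "U * U \<le> U'" "z' = 2 * z"
  shows "exp z' \<le> U'"
proof -
  have "exp z' = exp z * exp z" using assms by (simp add: exp_add[symmetric])
  also have "\<dots> \<le> U * U"
  proof -
    have "0 \<le> U" using assms(1) exp_gt_zero[of z] by linarith
    then show ?thesis using assms by (intro mult_mono) auto
  qed
  finally show ?thesis using assms by linarith
qed

lemma ln_lb_from_exp:
  fixes l U u :: real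
  assumes "exp l \<le> U" "u * U \<le> 1" "0 < u"
  shows "l \<le> - ln u"
proof -
  have "u * exp l \<le> 1" using assms by (smt (verit) mult_left_mono)
  then have "u \<le> exp (- l)" by (simp add: exp_minus field_simps)
  then have "ln u \<le> - l" using assms by (metis ln_exp ln_le_cancel_iff exp_gt_zero)
  then show ?thesis by simp
qed

lemma ln_ub_from_exp:
  fixes l L u :: real
  assumes "L \<le> exp l" "1 \<le> u * L" "0 < u"
  shows "- ln u \<le> l"
proof -
  have "1 \<le> u * exp l" using assms by (smt (verit) mult_left_mono)
  then have "exp (- l) \<le> u" by (simp add: exp_minus field_simps)
  then have "- l \<le> ln u" using assms by (metis ln_exp ln_le_cancel_iff exp_gt_zero)
  then show ?thesis by simp
qed

lemma lnw_lb:
  fixes y L w :: real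
  assumes "L \<le> exp y" "1 \<le> w * L" "0 < w"
  shows "- y \<le> ln w"
  using ln_ub_from_exp[OF assms] by simp

lemma lnw_ub:
  fixes y U w :: real
  assumes "exp y \<le> U" "w * U \<le> 1" "0 < w"
  shows "ln w \<le> - y"
  using ln_lb_from_exp[OF assms] by simp


lemma ustar_pos_crit:
  fixes u llo lhi y w :: real
  assumes u: "0 < u" "u < 1" and l: "llo \<le> - ln u" "- ln u \<le> lhi" "0 < llo"
    and yw: "- y \<le> ln w" "w = (1 - u) / lhi"
    and fin: "0 < - y - 1 + (1 + u) * llo / (2 * (1 - u))"
  shows "0 < ustar_eq u"
proof -
  define ell where "ell = - ln u"
  have ep: "0 < ell" using l by (simp add: ell_def)
  have wp: "0 < w" using yw u l by simp
  have el: "ell \<le> lhi" "llo \<le> ell" using l by (simp_all add: ell_def)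
  have "w \<le> (1 - u) / ell" unfolding yw(2)
    by (rule divide_left_mono) (use u el ep mult_pos_pos[of lhi ell] in auto)
  then have a: "ln w \<le> ln ((1 - u) / ell)" using wp by simp
  have b: "(1 + u) * llo / (2 * (1 - u)) \<le> (1 + u) * ell / (2 * (1 - u))"
    using u l by (intro divide_right_mono mult_left_mono) (auto simp: ell_def)
  have c0: "- (1/2) * ((1 + u) * ln u / (1 - u)) = (1 + u) * (- ln u) / (2 * (1 - u))"
    by simp
  have c: "ustar_eq u = ln ((1 - u) / ell) - 1 + (1 + u) * ell / (2 * (1 - u))"
    unfolding ustar_eq_def ell_def by simp
  show ?thesis using a b c yw fin by linarith
qed

lemma ustar_neg_crit:
  fixes u llo lhi y w :: real
  assumes u: "0 < u" "u < 1" and l: "llo \<le> - ln u" "- ln u \<le> lhi" "0 < llo"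
    and yw: "ln w \<le> - y" "w = (1 - u) / llo"
    and fin: "- y - 1 + (1 + u) * lhi / (2 * (1 - u)) < 0"
  shows "ustar_eq u < 0"
proof -
  define ell where "ell = - ln u"
  have ep: "0 < ell" using l by (simp add: ell_def)
  have el: "ell \<le> lhi" "llo \<le> ell" using l by (simp_all add: ell_def)
  have "(1 - u) / ell \<le> w" unfolding yw(2)
    by (rule divide_left_mono) (use u el l mult_pos_pos[of ell llo] in auto)
  moreover have pos: "0 < (1 - u) / ell" using u ep by simp
  ultimately have a: "ln ((1 - u) / ell) \<le> ln w" by (subst ln_le_cancel_iff) auto
  have b: "(1 + u) * ell / (2 * (1 - u)) \<le> (1 + u) * lhi / (2 * (1 - u))"
    using u l by (intro divide_right_mono mult_left_mono) (auto simp: ell_def)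
  have c0: "- (1/2) * ((1 + u) * ln u / (1 - u)) = (1 + u) * (- ln u) / (2 * (1 - u))"
    by simp
  have c: "ustar_eq u = ln ((1 - u) / ell) - 1 + (1 + u) * ell / (2 * (1 - u))"
    unfolding ustar_eq_def ell_def by simp
  show ?thesis using a b c yw fin by linarith
qed

lemma num_pos: "0 < ustar_eq (25288929/5000000000)"
proof -
  have pa0: "exp ((528682648038553/25600000000000000)::real) \<le> (510433193580863484152407544199/500000000000000000000000000000)" by (rule exp_ub0[of _ 8]) (simp_all add: eval_nat_numeral)
  have pa1: "exp ((528682648038553/12800000000000000)::real) \<le> (1042168180436637020653755800269/1000000000000000000000000000000)" by (rule exp_ub_sq[OF pa0]) simp_all
  have pa2: "exp ((528682648038553/6400000000000000)::real) \<le> (1086114516314610818461346072867/1000000000000000000000000000000)" by (rule exp_ub_sq[OF pa1]) simp_all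
  have pa3: "exp ((528682648038553/3200000000000000)::real) \<le> (589822371274660504870998738187/500000000000000000000000000000)" by (rule exp_ub_sq[OF pa2]) simp_all
  have pa4: "exp ((528682648038553/1600000000000000)::real) \<le> (347890429656063461481577442727/250000000000000000000000000000)" by (rule exp_ub_sq[OF pa3]) simp_all
  have pa5: "exp ((528682648038553/800000000000000)::real) \<le> (484111004185121758250084679141/250000000000000000000000000000)" by (rule exp_ub_sq[OF pa4]) simp_all
  have pa6: "exp ((528682648038553/400000000000000)::real) \<le> (3749815429970031624506521913369/1000000000000000000000000000000)" by (rule exp_ub_sq[OF pa5]) simp_all
  have pa7: "exp ((528682648038553/200000000000000)::real) \<le> (14061115758841333146325942116299/1000000000000000000000000000000)" by (rule exp_ub_sq[OF pa6]) simp_all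
  have pa8: "exp ((528682648038553/100000000000000)::real) \<le> (197714976383536080087770690454483/1000000000000000000000000000000)" by (rule exp_ub_sq[OF pa7]) simp_all
  have p_llo: "(528682648038553/100000000000000) \<le> - ln ((25288929/5000000000)::real)" by (rule ln_lb_from_exp[OF pa8]) simp_all
  have pb0: "(1020866387161727087099893684273/1000000000000000000000000000000) \<le> exp ((132170662009639/6400000000000000)::real)" by (rule exp_lb0[of _ _ 8]) (simp_all add: eval_nat_numeral)
  have pb1: "(1042168180436637263201561197797/1000000000000000000000000000000) \<le> exp ((132170662009639/3200000000000000)::real)" by (rule exp_lb_sq[OF pb0]) simp_all
  have pb2: "(1086114516314611324012556112949/1000000000000000000000000000000) \<le> exp ((132170662009639/1600000000000000)::real)" by (rule exp_lb_sq[OF pb1]) simp_all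
  have pb3: "(1179644742549322107915013406273/1000000000000000000000000000000) \<le> exp ((132170662009639/800000000000000)::real)" by (rule exp_lb_sq[OF pb2]) simp_all
  have pb4: "(1391561718624256436834359073383/1000000000000000000000000000000) \<le> exp ((132170662009639/400000000000000)::real)" by (rule exp_lb_sq[OF pb3]) simp_all
  have pb5: "(19364440167404942438172544861/10000000000000000000000000000) \<le> exp ((132170662009639/200000000000000)::real)" by (rule exp_lb_sq[OF pb4]) simp_all
  have pb6: "(3749815429970059551193066619441/1000000000000000000000000000000) \<le> exp ((132170662009639/100000000000000)::real)" by (rule exp_lb_sq[OF pb5]) simp_all
  have pb7: "(1406111575884154258616616866767/100000000000000000000000000000) \<le> exp ((132170662009639/50000000000000)::real)" by (rule exp_lb_sq[OF pb6]) simp_all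
  have pb8: "(49428744095885492500861642010813/250000000000000000000000000000) \<le> exp ((132170662009639/25000000000000)::real)" by (rule exp_lb_sq[OF pb7]) simp_all
  have p_lhi: "- ln ((25288929/5000000000)::real) \<le> (132170662009639/25000000000000)" by (rule ln_ub_from_exp[OF pb8]) simp_all
  have pc0: "(1026441803876739136964694746871/1000000000000000000000000000000) \<le> exp ((167028877635377/6400000000000000)::real)" by (rule exp_lb0[of _ _ 8]) (simp_all add: eval_nat_numeral)
  have pc1: "(1053582776745734210782081960931/1000000000000000000000000000000) \<le> exp ((167028877635377/3200000000000000)::real)" by (rule exp_lb_sq[OF pc0]) simp_all
  have pc2: "(222007333491050323292805920009/200000000000000000000000000000) \<le> exp ((167028877635377/1600000000000000)::real)" by (rule exp_lb_sq[OF pc1]) simp_all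
  have pc3: "(1232181403095160863179441519539/1000000000000000000000000000000) \<le> exp ((167028877635377/800000000000000)::real)" by (rule exp_lb_sq[OF pc2]) simp_all
  have pc4: "(303654202026711860163065234897/200000000000000000000000000000) \<le> exp ((167028877635377/400000000000000)::real)" by (rule exp_lb_sq[OF pc3]) simp_all
  have pc5: "(2305146860211978529105396275663/1000000000000000000000000000000) \<le> exp ((167028877635377/200000000000000)::real)" by (rule exp_lb_sq[OF pc4]) simp_all
  have pc6: "(2656851023572571440777190282301/500000000000000000000000000000) \<le> exp ((167028877635377/100000000000000)::real)" by (rule exp_lb_sq[OF pc5]) simp_all
  have p_lnw: "- (167028877635377/100000000000000) \<le> ln ((2261232305000/12015514728149)::real)" by (rule lnw_lb[OF pc6]) simp_all
  show ?thesis by (rule ustar_pos_crit[OF _ _ p_llo p_lhi _ p_lnw]) simp_all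
qed

lemma num_neg: "ustar_eq (5057787/1000000000) < 0"
proof -
  have ma0: "exp ((528682624312759/25600000000000000)::real) \<le> (510433193107799703056712913911/500000000000000000000000000000)" by (rule exp_ub0[of _ 8]) (simp_all add: eval_nat_numeral)
  have ma1: "exp ((528682624312759/12800000000000000)::real) \<le> (260542044626224342283000441443/250000000000000000000000000000)" by (rule exp_ub_sq[OF ma0]) simp_all
  have ma2: "exp ((528682624312759/6400000000000000)::real) \<le> (271528628072053906696376199203/250000000000000000000000000000)" by (rule exp_ub_sq[OF ma1]) simp_all
  have ma3: "exp ((528682624312759/3200000000000000)::real) \<le> (23592894676061369875137871793/20000000000000000000000000000)" by (rule exp_ub_sq[OF ma2]) simp_all
  have ma4: "exp ((528682624312759/1600000000000000)::real) \<le> (139156169798931232744204481661/100000000000000000000000000000)" by (rule exp_ub_sq[OF ma3]) simp_all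
  have ma5: "exp ((528682624312759/800000000000000)::real) \<le> (1936443959310898092455281989533/1000000000000000000000000000000)" by (rule exp_ub_sq[OF ma4]) simp_all
  have ma6: "exp ((528682624312759/400000000000000)::real) \<le> (1874907603775833573547983098219/500000000000000000000000000000)" by (rule exp_ub_sq[OF ma5]) simp_all
  have ma7: "exp ((528682624312759/200000000000000)::real) \<le> (3515278522696438141017464126177/250000000000000000000000000000)" by (rule exp_ub_sq[OF ma6]) simp_all
  have ma8: "exp ((528682624312759/100000000000000)::real) \<le> (98857464737046820500204990588599/500000000000000000000000000000)" by (rule exp_ub_sq[OF ma7]) simp_all
  have m_llo: "(528682624312759/100000000000000) \<le> - ln ((5057787/1000000000)::real)" by (rule ln_lb_from_exp[OF ma8]) simp_all
  have mb0: "(255216596553899881227126153587/250000000000000000000000000000) \<le> exp ((264341312156381/12800000000000000)::real)" by (rule exp_lb0[of _ _ 8]) (simp_all add: eval_nat_numeral)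
  have mb1: "(130271022313112201459975915971/125000000000000000000000000000) \<le> exp ((264341312156381/6400000000000000)::real)" by (rule exp_lb_sq[OF mb0]) simp_all
  have mb2: "(543057256144108066168357121311/500000000000000000000000000000) \<le> exp ((264341312156381/3200000000000000)::real)" by (rule exp_lb_sq[OF mb1]) simp_all
  have mb3: "(294911183450767397982476039389/250000000000000000000000000000) \<le> exp ((264341312156381/1600000000000000)::real)" by (rule exp_lb_sq[OF mb2]) simp_all
  have mb4: "(1391561697989314918350062258793/1000000000000000000000000000000) \<le> exp ((264341312156381/800000000000000)::real)" by (rule exp_lb_sq[OF mb3]) simp_all
  have mb5: "(1936443959310905303272002161473/1000000000000000000000000000000) \<le> exp ((264341312156381/400000000000000)::real)" by (rule exp_lb_sq[OF mb4]) simp_all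
  have mb6: "(3749815207551695073780925146441/1000000000000000000000000000000) \<le> exp ((264341312156381/200000000000000)::real)" by (rule exp_lb_sq[OF mb5]) simp_all
  have mb7: "(703055704539298100194288382787/50000000000000000000000000000) \<le> exp ((264341312156381/100000000000000)::real)" by (rule exp_lb_sq[OF mb6]) simp_all
  have mb8: "(3089295773032805170542239702199/15625000000000000000000000000) \<le> exp ((264341312156381/50000000000000)::real)" by (rule exp_lb_sq[OF mb7]) simp_all
  have m_lhi: "- ln ((5057787/1000000000)::real) \<le> (264341312156381/50000000000000)" by (rule ln_ub_from_exp[OF mb8]) simp_all
  have mc0: "exp ((167028873268263/6400000000000000)::real) \<le> (1026441803176334709574074803437/1000000000000000000000000000000)" by (rule exp_ub0[of _ 8]) (simp_all add: eval_nat_numeral)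
  have mc1: "exp ((167028873268263/3200000000000000)::real) \<le> (210716555061577088696896667279/200000000000000000000000000000)" by (rule exp_ub_sq[OF mc0]) simp_all
  have mc2: "exp ((167028873268263/1600000000000000)::real) \<le> (1110036664425466224951768692311/1000000000000000000000000000000)" by (rule exp_ub_sq[OF mc1]) simp_all
  have mc3: "exp ((167028873268263/800000000000000)::real) \<le> (770113372730509446350807043/625000000000000000000000000)" by (rule exp_ub_sq[OF mc2]) simp_all
  have mc4: "exp ((167028873268263/400000000000000)::real) \<le> (1518270993557403060602343077939/1000000000000000000000000000000)" by (rule exp_ub_sq[OF mc3]) simp_all
  have mc5: "exp ((167028873268263/200000000000000)::real) \<le> (576286702469445961488653844527/250000000000000000000000000000)" by (rule exp_ub_sq[OF mc4]) simp_all
  have mc6: "exp ((167028873268263/100000000000000)::real) \<le> (1062740363017944748951712575111/200000000000000000000000000000)" by (rule exp_ub_sq[OF mc5]) simp_all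
  have m_lnw: "ln ((99494221300000/528682624312759)::real) \<le> - (167028873268263/100000000000000)" by (rule lnw_ub[OF mc6]) simp_all
  show ?thesis by (rule ustar_neg_crit[OF _ _ m_llo m_lhi _ m_lnw]) simp_all
qed

lemma ustar_Gs:
  assumes a: "0 < a"
  shows "ustar_eq (exp (-2 * a)) = Gs a"
proof -
  have [simp]: "exp (2 * x) = exp x * exp x" "exp (x * 2) = exp x * exp x" for x :: real
    by (subst exp_add [symmetric]; simp)+
  have e1: "1 - exp (-2 * a) = 2 * exp (-a) * sinh a"
    by (simp add: exp_minus field_simps sinh_def)
  have e2: "1 + exp (-2 * a) = 2 * exp (-a) * cosh a"
    by (simp add: exp_minus field_simps cosh_def)
  have s: "0 < sinh a" using a by simp
  have "(1 - exp (-2 * a)) / (- ln (exp (-2 * a))) = (2 * exp (-a) * sinh a) / (2 * a)"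
    unfolding e1 by simp
  also have "\<dots> = exp (-a) * (sinh a / a)" by simp
  finally have eq: "(1 - exp (-2 * a)) / (- ln (exp (-2 * a))) = exp (-a) * (sinh a / a)" .
  have pos: "0 < sinh a / a" using s a by simp
  have "ln (exp (-a) * (sinh a / a)) = ln (exp (-a)) + ln (sinh a / a)"
    by (rule ln_mult_pos) (use pos in auto)
  then have lnm: "ln (exp (-a) * (sinh a / a)) = - a + ln (sinh a / a)" by (simp only: ln_exp)
  have l: "ln ((1 - exp (-2 * a)) / (- ln (exp (-2 * a)))) = - a + ln (sinh a / a)"
    unfolding eq by (rule lnm)
  have r: "(1 + exp (-2 * a)) * ln (exp (-2 * a)) / (1 - exp (-2 * a)) = - 2 * a * cosh a / sinh a"
    unfolding e1 e2 using s by (simp add: field_simps)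
  show ?thesis unfolding ustar_eq_def l r Gs_def by (simp add: field_simps)
qed

lemma Gs_cont: "0 < x \<Longrightarrow> continuous_on {x..y} Gs"
  by (intro continuous_at_imp_continuous_on ballI DERIV_isCont[OF Gs_deriv]) auto

lemma ustar_props:
  assumes u: "0 < u1" "u1 < u2" "u2 < 1" "0 < ustar_eq u1" "ustar_eq u2 < 0"
  shows "(\<exists>!u. 0 < u \<and> u < 1 \<and> ustar_eq u = 0) \<and> u1 < u_star \<and> u_star < u2
         \<and> (\<forall>\<rho>. u_star \<le> \<rho> \<longrightarrow> \<rho> < 1 \<longrightarrow> ustar_eq \<rho> \<le> 0)"
proof -
  define A where "A u = - ln u / 2" for u :: real
  have Apos: "0 < A u" if "0 < u" "u < 1" for u using that by (simp add: A_def)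
  have Aexp: "exp (-2 * A u) = u" if "0 < u" for u using that by (simp add: A_def)
  have AG: "ustar_eq u = Gs (A u)" if "0 < u" "u < 1" for u
    using ustar_Gs[OF Apos[OF that]] Aexp[OF that(1)] by simp
  have a21: "A u2 < A u1" using u by (simp add: A_def)
  have g1: "0 < Gs (A u1)" using u AG[of u1] by simp
  have g2: "Gs (A u2) < 0" using u AG[of u2] by simp
  have cont: "continuous_on {A u2..A u1} Gs" using Gs_cont Apos[of u2] u by simp
  have "\<exists>x. A u2 \<le> x \<and> x \<le> A u1 \<and> Gs x = 0"
    by (rule IVT'[OF _ _ _ cont]) (use g1 g2 a21 in auto)
  then obtain a0 where a0: "A u2 \<le> a0" "a0 \<le> A u1" "Gs a0 = 0" by blast
  have a0s: "A u2 < a0" "a0 < A u1" using a0 g1 g2 by (auto simp: order.order_iff_strict)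
  have a0p: "0 < a0" using a0s Apos[of u2] u by simp
  define u0 where "u0 = exp (-2 * a0)"
  have u0: "0 < u0" "u0 < 1" using a0p by (auto simp: u0_def)
  have r0: "ustar_eq u0 = 0" using ustar_Gs[OF a0p] a0 by (simp add: u0_def)
  have u0b: "u1 < u0" "u0 < u2"
  proof -
    have "u1 = exp (-2 * A u1)" using Aexp[of u1] u by simp
    also have "\<dots> < exp (-2 * a0)" using a0s by simp
    finally show "u1 < u0" by (simp add: u0_def)
    have "u0 = exp (-2 * a0)" by (simp add: u0_def)
    also have "\<dots> < exp (-2 * A u2)" using a0s by simp
    also have "\<dots> = u2" using Aexp[of u2] u by simp
    finally show "u0 < u2" .
  qed
  have uniq: "v = u0" if v: "0 < v" "v < 1" "ustar_eq v = 0" for v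
  proof -
    have gv: "Gs (A v) = 0" using AG[OF v(1,2)] v by simp
    have "A v = a0"
    proof (rule ccontr)
      assume "A v \<noteq> a0"
      then consider "A v < a0" | "a0 < A v" by linarith
      then show False
      proof cases
        case 1
        then show False using Gs_neg_before_root[OF a0(3) Apos[OF v(1,2)]] gv by simp
      next
        case 2
        then show False using Gs_neg_before_root[OF gv a0p] a0 by simp
      qed
    qed
    then show ?thesis using Aexp[OF v(1)] by (simp add: u0_def)
  qed
  have ex1: "\<exists>!u. 0 < u \<and> u < 1 \<and> ustar_eq u = 0"
  proof (rule ex1I[of _ u0])
    show "0 < u0 \<and> u0 < 1 \<and> ustar_eq u0 = 0" using u0 r0 by simp
  next
    fix v assume "0 < v \<and> v < 1 \<and> ustar_eq v = 0"
    then show "v = u0" by (intro uniq) auto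
  qed
  have us: "u_star = u0"
    unfolding u_star_def
  proof (rule the_equality)
    show "0 < u0 \<and> u0 < 1 \<and> ustar_eq u0 = 0" using u0 r0 by simp
  next
    fix v assume "0 < v \<and> v < 1 \<and> ustar_eq v = 0"
    then show "v = u0" by (intro uniq) auto
  qed
  have neg: "ustar_eq \<rho> \<le> 0" if "u_star \<le> \<rho>" "\<rho> < 1" for \<rho>
  proof -
    have rp: "0 < \<rho>" using that us u0 by simp
    have "A \<rho> \<le> a0"
    proof -
      have "ln u0 \<le> ln \<rho>" using that us u0 rp by simp
      then show ?thesis by (simp add: A_def u0_def)
    qed
    then consider "A \<rho> < a0" | "A \<rho> = a0" by linarith
    then show ?thesis
    proof cases
      case 1
      then show ?thesis using Gs_neg_before_root[OF a0(3) Apos[OF rp that(2)]] AG[OF rp that(2)] by simp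
    next
      case 2
      then have "\<rho> = u0" using Aexp[OF rp] by (simp add: u0_def)
      then show ?thesis using r0 by simp
    qed
  qed
  show ?thesis
  proof (intro conjI)
    show "\<exists>!u. 0 < u \<and> u < 1 \<and> ustar_eq u = 0" by (rule ex1)
    show "u1 < u_star" "u_star < u2" using u0b us by simp_all
    show "\<forall>\<rho>. u_star \<le> \<rho> \<longrightarrow> \<rho> < 1 \<longrightarrow> ustar_eq \<rho> \<le> 0" using neg by blast
  qed
qed

lemma binom_tail_nonneg: "0 \<le> binom_tail n p x"
  by (simp add: binom_tail_def)

lemma binom_tail_le1: "binom_tail n p x \<le> 1"
  by (simp add: binom_tail_def)

lemma binom_tail_le0: "x \<le> 0 \<Longrightarrow> binom_tail n p x = 1"
proof -
  assume x: "x \<le> 0"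
  have "{k. x \<le> real k} = UNIV" using x by (auto intro: order_trans[OF _ of_nat_0_le_iff])
  then show ?thesis by (simp add: binom_tail_def)
qed

lemma lc_const1: "log_concave (\<lambda>_. 1)"
  unfolding log_concave_def by simp

lemma LC_le:
  assumes "log_concave g" "\<forall>y. \<phi> y \<le> g y"
  shows "LC_majorant \<phi> x \<le> g x"
  unfolding LC_majorant_def
proof (rule cINF_lower)
  show "bdd_below ((\<lambda>g. g x) ` {g. log_concave g \<and> (\<forall>y. \<phi> y \<le> g y)})"
    by (rule bdd_belowI[of _ 0]) (auto simp: log_concave_def)
qed (use assms in auto)

lemma LC_ge:
  assumes "\<forall>y. \<phi> y \<le> 1" "\<And>g. log_concave g \<Longrightarrow> \<forall>y. \<phi> y \<le> g y \<Longrightarrow> c \<le> g x"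
  shows "c \<le> LC_majorant \<phi> x"
  unfolding LC_majorant_def
proof (rule cINF_greatest)
  show "{g. log_concave g \<and> (\<forall>y. \<phi> y \<le> g y)} \<noteq> {}"
    using lc_const1 assms(1) by blast
qed (use assms in auto)

lemma lc_exp_affine:
  assumes C: "0 < C" and r: "0 < \<rho>"
  shows "log_concave (\<lambda>y. C * \<rho> powr (y - c))"
  unfolding log_concave_def
proof (intro conjI allI impI)
  fix x show "0 \<le> C * \<rho> powr (x - c)" using C by simp
next
  fix x y t :: real assume t: "0 < t \<and> t < 1"
  have f1: "(C * \<rho> powr (x - c)) powr (1 - t) = C powr (1 - t) * \<rho> powr ((x - c) * (1 - t))"
    using C r by (simp add: powr_mult powr_powr)
  have f2: "(C * \<rho> powr (y - c)) powr t = C powr t * \<rho> powr ((y - c) * t)"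
    using C r by (simp add: powr_mult powr_powr)
  have "(C * \<rho> powr (x - c)) powr (1 - t) * (C * \<rho> powr (y - c)) powr t
        = (C powr (1 - t) * C powr t) * (\<rho> powr ((x - c) * (1 - t)) * \<rho> powr ((y - c) * t))"
    by (simp only: f1 f2 mult_ac)
  also have "\<dots> = C powr ((1 - t) + t) * \<rho> powr ((x - c) * (1 - t) + (y - c) * t)"
    by (simp only: powr_add)
  also have "\<dots> = C * \<rho> powr ((1 - t) * x + t * y - c)"
  proof -
    have e1: "C powr ((1 - t) + t) = C" using C by simp
    have e2: "(x - c) * (1 - t) + (y - c) * t = (1 - t) * x + t * y - c" by (simp add: algebra_simps)
    show ?thesis by (simp only: e1 e2)
  qed
  finally show "(C * \<rho> powr (x - c)) powr (1 - t) * (C * \<rho> powr (y - c)) powr t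
        \<le> C * \<rho> powr ((1 - t) * x + t * y - c)" by simp
qed

lemma key_bound:
  assumes p: "0 < p" "p < 1" and j: "j < n"
    and rdef: "\<rho> = Tb n p (Suc j) / Tb n p j" and ue: "ustar_eq \<rho> \<le> 0"
    and x: "real j < x" "x \<le> real j + 1"
  shows "Q_Lin_LC n p (x + 1/2) \<le> Q_LC n p x"
proof -
  have Tj: "0 < Tb n p j" using p j by (intro Tb_pos) auto
  have Tj1: "0 < Tb n p (Suc j)" using p j by (intro Tb_pos) auto
  have rpos: "0 < \<rho>" using Tj Tj1 by (simp add: rdef)
  have rle: "\<rho> < 1"
  proof -
    have "Tb n p (Suc j) < Tb n p j" using Tb_Suc[of j n p] Pb_pos[OF p, of j n] j by simp
    then show ?thesis using Tj by (simp add: rdef)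
  qed
  have T1: "Tb n p (Suc j) = Tb n p j * \<rho>" using Tj by (simp add: rdef)
  define h where "h y = Tb n p j * \<rho> powr (y - (real j + 1/2))" for y
  have lch: "log_concave h" unfolding h_def[abs_def] by (rule lc_exp_affine[OF Tj rpos])
  have maj: "lin_interp (binom_tail n p) y \<le> h y" for y
  proof -
    define k where "k = \<lfloor>y\<rfloor>"
    define t where "t = y - real_of_int k"
    have t: "0 \<le> t" "t < 1" unfolding t_def k_def by linarith+
    have b0: "binom_tail n p (real_of_int k) = Tb n p (nat k)" by (rule binom_tail_int[OF p])
    have b1: "binom_tail n p (real_of_int k + 1) = Tb n p (nat (k + 1))"
      using binom_tail_int[OF p, of n "k + 1"] by simp
    have li: "lin_interp (binom_tail n p) y = (1 - t) * Tb n p (nat k) + t * Tb n p (nat (k + 1))"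
      unfolding lin_interp_def Let_def t_def k_def using b0 b1 k_def by simp
    define P where "P = \<rho> powr (real_of_int k - real j)"
    have Ppos: "0 < P" using rpos by (simp add: P_def)
    have c0: "Tb n p (nat k) \<le> Tb n p j * P"
      using Tb_logconc_int[OF p j, of k] by (simp add: P_def rdef)
    have c1: "Tb n p (nat (k + 1)) \<le> Tb n p j * (P * \<rho>)"
    proof -
      have "Tb n p (nat (k + 1)) \<le> Tb n p j * \<rho> powr (real_of_int (k + 1) - real j)"
        using Tb_logconc_int[OF p j, of "k + 1"] by (simp add: rdef)
      also have "\<rho> powr (real_of_int (k + 1) - real j) = \<rho> powr ((real_of_int k - real j) + 1)"
        by (intro arg_cong[of _ _ "(powr) \<rho>"]) simp
      also have "\<dots> = P * \<rho>"
        by (subst powr_add) (simp add: P_def rpos abs_of_pos)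
      finally show ?thesis .
    qed
    have "lin_interp (binom_tail n p) y \<le> (1 - t) * (Tb n p j * P) + t * (Tb n p j * (P * \<rho>))"
      unfolding li using c0 c1 t by (intro add_mono mult_left_mono) auto
    also have "\<dots> = Tb n p j * P * (1 - (1 - \<rho>) * t)" by (simp add: algebra_simps)
    also have "\<dots> \<le> Tb n p j * P * \<rho> powr (t - 1/2)"
      using scalar_ineq[OF rpos rle ue, of t] Tj Ppos by (intro mult_left_mono) auto
    also have "\<dots> = h y"
      unfolding h_def P_def using rpos by (simp add: mult.assoc powr_add[symmetric] t_def algebra_simps)
    finally show ?thesis .
  qed
  have up: "Q_Lin_LC n p (x + 1/2) \<le> Tb n p j * \<rho> powr (x - real j)"
  proof -
    have "Q_Lin_LC n p (x + 1/2) \<le> h (x + 1/2)"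
      unfolding Q_Lin_LC_def by (rule LC_le[OF lch]) (use maj in auto)
    also have "h (x + 1/2) = Tb n p j * \<rho> powr (x - real j)" by (simp add: h_def)
    finally show ?thesis .
  qed
  have low: "Tb n p j * \<rho> powr (x - real j) \<le> Q_LC n p x"
    unfolding Q_LC_def
  proof (rule LC_ge)
    show "\<forall>y. binom_tail n p y \<le> 1" by (simp add: binom_tail_le1)
  next
    fix g assume lg: "log_concave g" and gm: "\<forall>y. binom_tail n p y \<le> g y"
    have g0: "Tb n p j \<le> g (real j)"
      using gm binom_tail_int[OF p, of n "int j"] by (metis nat_int of_int_of_nat_eq)
    have g1: "Tb n p (Suc j) \<le> g (real j + 1)"
      using gm binom_tail_int[OF p, of n "int j + 1"] by (metis nat_int of_int_of_nat_eq of_int_1 of_int_add of_nat_Suc Suc_eq_plus1 nat_int_add of_nat_1)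
    define t where "t = x - real j"
    have t: "0 < t" "t \<le> 1" using x by (auto simp: t_def)
    show "Tb n p j * \<rho> powr (x - real j) \<le> g x"
    proof (cases "t = 1")
      case True
      then have "x = real j + 1" by (simp add: t_def)
      then show ?thesis using g1 True T1 rpos by (simp add: t_def)
    next
      case False
      then have t1: "t < 1" using t by simp
      have "Tb n p j * \<rho> powr t = Tb n p j powr (1 - t) * Tb n p (Suc j) powr t"
      proof -
        have "Tb n p j powr (1 - t) * Tb n p (Suc j) powr t
              = Tb n p j powr (1 - t) * Tb n p j powr t * \<rho> powr t"
          using Tj rpos by (simp add: T1 powr_mult)
        also have "\<dots> = Tb n p j * \<rho> powr t" using Tj by (simp add: powr_add[symmetric])
        finally show ?thesis by simp
      qed
      also have "\<dots> \<le> g (real j) powr (1 - t) * g (real j + 1) powr t"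
        using g0 g1 Tj Tj1 t t1 by (intro mult_mono powr_mono2) auto
      also have "\<dots> \<le> g ((1 - t) * real j + t * (real j + 1))"
        using lg t t1 unfolding log_concave_def by blast
      also have "(1 - t) * real j + t * (real j + 1) = x" by (simp add: t_def algebra_simps)
      finally show ?thesis by (simp add: t_def)
    qed
  qed
  show ?thesis using up low by linarith
qed


lemma lin_interp_le1: "lin_interp (binom_tail n p) y \<le> 1"
proof -
  define t where "t = y - real_of_int \<lfloor>y\<rfloor>"
  have t: "0 \<le> t" "t \<le> 1" unfolding t_def by linarith+
  have "lin_interp (binom_tail n p) y
        = (1 - t) * binom_tail n p (real_of_int \<lfloor>y\<rfloor>) + t * binom_tail n p (real_of_int \<lfloor>y\<rfloor> + 1)"
    unfolding lin_interp_def Let_def t_def by simp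
  also have "\<dots> \<le> (1 - t) * 1 + t * 1"
    using t by (intro add_mono mult_left_mono binom_tail_le1) auto
  finally show ?thesis by simp
qed

lemma case_nonpos:
  assumes x: "x \<le> 0"
  shows "Q_Lin_LC n p (x + 1/2) \<le> Q_LC n p x"
proof -
  have "Q_Lin_LC n p (x + 1/2) \<le> 1"
    unfolding Q_Lin_LC_def using LC_le[OF lc_const1, of "lin_interp (binom_tail n p)"]
    by (simp add: lin_interp_le1)
  also have "1 \<le> Q_LC n p x"
    unfolding Q_LC_def
  proof (rule LC_ge)
    show "\<forall>y. binom_tail n p y \<le> 1" by (simp add: binom_tail_le1)
  next
    fix g assume "log_concave g" "\<forall>y. binom_tail n p y \<le> g y"
    then show "1 \<le> g x" using binom_tail_le0[OF x, of n p] by metis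
  qed
  finally show ?thesis .
qed

lemma case_pos:
  assumes p: "0 < p" "p < 1" and j: "j < n" and x: "real j < x" "x \<le> real j + 1"
    and us: "0 < u_star" "u_star < 1"
    and neg: "\<forall>\<rho>. u_star \<le> \<rho> \<longrightarrow> \<rho> < 1 \<longrightarrow> ustar_eq \<rho> \<le> 0"
    and cond: "u_sstar * (1 - p) * (real j + 1) \<le> (real n - real j) * p"
  shows "Q_Lin_LC n p (x + 1/2) \<le> Q_LC n p x"
proof -
  define \<rho> where "\<rho> = Tb n p (Suc j) / Tb n p j"
  have Tj: "0 < Tb n p j" using p j by (intro Tb_pos) auto
  have rle: "\<rho> < 1"
  proof -
    have "Tb n p (Suc j) < Tb n p j" using Tb_Suc[of j n p] Pb_pos[OF p, of j n] j by simp
    then show ?thesis using Tj by (simp add: \<rho>_def)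
  qed
  define a b where "a = Pb n p j" and "b = Pb n p (Suc j)"
  define q where "q = 1 - p"
  have q: "0 < q" using p by (simp add: q_def)
  have a0: "0 \<le> a" using p by (simp add: a_def Pb_nonneg)
  have rat: "b * (real (Suc j) * q) = a * (real (n - j) * p)"
    using Pb_ratio[OF j, of p] by (simp add: a_def b_def q_def)
  have nj: "real (n - j) = real n - real j" using j by (simp add: of_nat_diff)
  have bT: "b \<le> Tb n p (Suc j)" using Tb_Suc_all[of n p "Suc j"] Tb_nonneg[of p n "Suc (Suc j)"] p
    by (simp add: b_def)
  have Tj_eq: "Tb n p j = a + Tb n p (Suc j)" using Tb_Suc_all[of n p j] by (simp add: a_def)
  have c1: "u_star * q * real (Suc j) * a \<le> (1 - u_star) * (real (n - j) * p) * a"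
  proof -
    have e1: "u_sstar * (q * real (Suc j)) = u_sstar * (1 - p) * (real j + 1)" by (simp add: q_def algebra_simps)
    have e2: "real (n - j) * p = (real n - real j) * p" by (simp add: nj)
    have "u_sstar * (q * real (Suc j)) \<le> real (n - j) * p" using cond e1 e2 by linarith
    then have "u_star * (q * real (Suc j)) \<le> (1 - u_star) * (real (n - j) * p)"
      using us by (simp add: u_sstar_def field_simps)
    then show ?thesis using a0 by (intro mult_right_mono) (auto simp: mult_ac)
  qed
  have "(real (Suc j) * q) * (u_star * a) \<le> (real (Suc j) * q) * ((1 - u_star) * b)"
  proof -
    have "(real (Suc j) * q) * (u_star * a) = u_star * q * real (Suc j) * a" by (simp add: mult_ac)
    also have "\<dots> \<le> (1 - u_star) * (real (n - j) * p) * a" by (rule c1)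
    also have "\<dots> = (1 - u_star) * (a * (real (n - j) * p))" by (simp add: mult_ac)
    also have "\<dots> = (1 - u_star) * (b * (real (Suc j) * q))" by (simp only: rat)
    also have "\<dots> = (real (Suc j) * q) * ((1 - u_star) * b)" by (simp add: mult_ac)
    finally show ?thesis .
  qed
  then have "u_star * a \<le> (1 - u_star) * b" using q by (simp add: mult_le_cancel_left_pos)
  also have "\<dots> \<le> (1 - u_star) * Tb n p (Suc j)" using bT us by (intro mult_left_mono) auto
  finally have "u_star * Tb n p j \<le> Tb n p (Suc j)" using Tj_eq by (simp add: algebra_simps)
  then have "u_star \<le> \<rho>" using Tj by (simp add: \<rho>_def pos_le_divide_eq)
  then have ue: "ustar_eq \<rho> \<le> 0" using neg rle by blast
  show ?thesis by (rule key_bound[OF p j \<rho>_def ue x])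
qed

lemma ceil_split:
  fixes x :: real
  assumes "0 < x"
  obtains j :: nat where "real j < x" "x \<le> real j + 1" "real j + 1 = real_of_int \<lceil>x\<rceil>"
proof -
  have c: "1 \<le> \<lceil>x\<rceil>" using assms by (simp add: one_le_ceiling)
  define j where "j = nat (\<lceil>x\<rceil> - 1)"
  have jr: "real j = real_of_int \<lceil>x\<rceil> - 1" using c by (simp add: j_def)
  show ?thesis
  proof (rule that)
    show "real j < x" "x \<le> real j + 1" using jr ceiling_eq_iff[of x "\<lceil>x\<rceil>"] by simp_all
    show "real j + 1 = real_of_int \<lceil>x\<rceil>" using jr by simp
  qed
qed

theorem proposition2p7:
  fixes n :: nat and p :: real
  assumes "1 \<le> n" and "0 < p" and "p < 1"
  shows
    "(\<exists>!u. 0 < u \<and> u < 1 \<and> ustar_eq u = 0)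
     \<and> 0.00505778 \<le> u_star \<and> u_star < 0.00505779
     \<and> 0.00508349 \<le> u_sstar \<and> u_sstar < 0.00508350
     \<and> (\<forall>x::real. x \<le> real_of_int (j_sstar n p) \<longrightarrow>
           Q_Lin_LC n p (x + 1/2) \<le> Q_LC n p x)
     \<and> 196.714 \<le> 1 / u_sstar \<and> 1 / u_sstar < 196.715
     \<and> (real n \<le> p / (1 - p) * (1 / u_sstar) \<longrightarrow>
         (\<forall>x::real. x \<le> real n \<longrightarrow> Q_Lin_LC n p (x + 1/2) \<le> Q_LC n p x))
     \<and> (n \<le> 196 \<and> 1/2 \<le> p \<longrightarrow>
         (\<forall>x::real. x \<le> real n \<longrightarrow> Q_Lin_LC n p (x + 1/2) \<le> Q_LC n p x))"
proof -
  have p: "0 < p" "p < 1" using assms by simp_all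
  define u1 u2 :: real where "u1 = 25288929/5000000000" and "u2 = 5057787/1000000000"
  have P: "(\<exists>!u. 0 < u \<and> u < 1 \<and> ustar_eq u = 0) \<and> u1 < u_star \<and> u_star < u2
         \<and> (\<forall>\<rho>. u_star \<le> \<rho> \<longrightarrow> \<rho> < 1 \<longrightarrow> ustar_eq \<rho> \<le> 0)"
    by (rule ustar_props) (use num_pos num_neg in \<open>simp_all add: u1_def u2_def\<close>)
  then have ex1: "\<exists>!u. 0 < u \<and> u < 1 \<and> ustar_eq u = 0" and us1: "u1 < u_star"
    and us2: "u_star < u2" and neg: "\<forall>\<rho>. u_star \<le> \<rho> \<longrightarrow> \<rho> < 1 \<longrightarrow> ustar_eq \<rho> \<le> 0"
    by blast+
  have usp: "0 < u_star" "u_star < 1" using us1 us2 by (simp_all add: u1_def u2_def)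
  have b1: "0.00505778 \<le> u_star" using us1 by (simp add: u1_def)
  have b2: "u_star < 0.00505779" using us2 by (simp add: u2_def)
  have ss: "u_sstar = u_star / (1 - u_star)" by (simp add: u_sstar_def)
  have b3: "0.00508349 \<le> u_sstar"
    unfolding ss using usp us1 by (simp add: le_divide_eq u1_def)
  have b4: "u_sstar < 0.00508350"
    unfolding ss using usp us2 by (simp add: divide_less_eq u2_def)
  have inv: "1 / u_sstar = (1 - u_star) / u_star" using usp by (simp add: ss)
  have b5: "196.714 \<le> 1 / u_sstar"
    unfolding inv using usp us2 by (simp add: le_divide_eq u2_def)
  have b6: "1 / u_sstar < 196.715"
    unfolding inv using usp us1 by (simp add: divide_less_eq u1_def)
  have ussp: "0 < u_sstar" using usp by (simp add: ss)
  define r where "r = u_sstar * (1 - p) / p"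
  have r0: "0 \<le> r" using ussp p by (simp add: r_def)
  have condr: "u_sstar * (1 - p) * (real j + 1) \<le> (real n - real j) * p"
    if "r * (real j + 1) \<le> real n - real j" for j :: nat
  proof -
    have "u_sstar * (1 - p) * (real j + 1) = p * (r * (real j + 1))" using p by (simp add: r_def)
    also have "\<dots> \<le> p * (real n - real j)" using that p by (intro mult_left_mono) auto
    finally show ?thesis by (simp add: mult.commute)
  qed
  have partii: "\<forall>x::real. x \<le> real_of_int (j_sstar n p) \<longrightarrow> Q_Lin_LC n p (x + 1/2) \<le> Q_LC n p x"
  proof (intro allI impI)
    fix x :: real assume xj: "x \<le> real_of_int (j_sstar n p)"
    show "Q_Lin_LC n p (x + 1/2) \<le> Q_LC n p x"
    proof (cases "x \<le> 0")
      case True then show ?thesis by (rule case_nonpos)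
    next
      case False
      then obtain j :: nat where j: "real j < x" "x \<le> real j + 1" "real j + 1 = real_of_int \<lceil>x\<rceil>"
        using ceil_split[of x] by auto
      have js: "j_sstar n p = \<lfloor>(real n - r) / (1 + r)\<rfloor>" by (simp add: j_sstar_def r_def Let_def)
      have "\<lceil>x\<rceil> \<le> j_sstar n p" using xj by (simp add: ceiling_le_iff)
      then have "real j + 1 \<le> real_of_int (j_sstar n p)" using j(3) by (metis of_int_le_iff)
      also have "\<dots> \<le> (real n - r) / (1 + r)" unfolding js by (rule of_int_floor_le)
      finally have "(real j + 1) * (1 + r) \<le> real n - r" using r0 by (simp add: le_divide_eq)
      then have h: "real j + 1 + r * (real j + 1) + r \<le> real n" by (simp add: algebra_simps)
      have "real j + 1 \<le> real n" using h r0 mult_nonneg_nonneg[of r "real j + 1"] by linarith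
      then have "real (j + 1) \<le> real n" by simp
      then have jn: "j < n" by (simp only: of_nat_le_iff)
      have "r * (real j + 1) \<le> real n - real j" using h r0 by linarith
      then show ?thesis using case_pos[OF p jn j(1,2) usp neg] condr by blast
    qed
  qed
  have partiii: "\<forall>x::real. x \<le> real n \<longrightarrow> Q_Lin_LC n p (x + 1/2) \<le> Q_LC n p x"
    if nle: "real n \<le> p / (1 - p) * (1 / u_sstar)"
  proof (intro allI impI)
    fix x :: real assume xn: "x \<le> real n"
    show "Q_Lin_LC n p (x + 1/2) \<le> Q_LC n p x"
    proof (cases "x \<le> 0")
      case True then show ?thesis by (rule case_nonpos)
    next
      case False
      then obtain j :: nat where j: "real j < x" "x \<le> real j + 1" "real j + 1 = real_of_int \<lceil>x\<rceil>"
        using ceil_split[of x] by auto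
      have "\<lceil>x\<rceil> \<le> int n" using xn by (simp add: ceiling_le_iff)
      then have jn1: "real j + 1 \<le> real n" using j(3) by (metis of_int_le_iff of_int_of_nat_eq)
      then have jn: "j < n" by simp
      have rn: "r * real n \<le> 1"
      proof -
        have "r * real n \<le> r * (p / (1 - p) * (1 / u_sstar))" using nle r0 by (intro mult_left_mono)
        also have "\<dots> = 1" using p ussp by (simp add: r_def field_simps)
        finally show ?thesis .
      qed
      have "r * (real j + 1) \<le> r * real n" using jn1 r0 by (intro mult_left_mono)
      then have "r * (real j + 1) \<le> real n - real j" using rn jn1 by linarith
      then show ?thesis using case_pos[OF p jn j(1,2) usp neg] condr by blast
    qed
  qed
  have last: "real n \<le> p / (1 - p) * (1 / u_sstar)" if "n \<le> 196 \<and> 1/2 \<le> p"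
  proof -
    have "1 \<le> p / (1 - p)" using that p by (simp add: le_divide_eq)
    have "real n \<le> 196.714" using that by simp
    also have "\<dots> \<le> 1 / u_sstar" by (rule b5)
    also have "\<dots> \<le> p / (1 - p) * (1 / u_sstar)"
      using mult_right_mono[OF \<open>1 \<le> p / (1 - p)\<close>, of "1 / u_sstar"] ussp by simp
    finally show ?thesis .
  qed
  show ?thesis using ex1 b1 b2 b3 b4 partii b5 b6 partiii last by blast
qed

end
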